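(* Let $G$ be a digraph such that $\mathrm{wcol}_\infty(G)\le c$ for some constant $c$. Then $G$ does not contain a directed path of length greater than $2^c-2$, and every directed topological minor $H$ of $G$ satisfies $|E(H)|/|V(H)|\le 4c$.
   Context: For a linear order $L$ of $V(G)$, $u$ is weakly $r$-reachable from $v$ if there is a directed path of length at most $r$ from $u$ to $v$ or from $v$ to $u$ on which $u$ is the $L$-minimum; $\mathrm{WReach}_r[G,L,v]$ is the set of such $u$; $\mathrm{wcol}_r(G)=\min_L\max_{v}|\mathrm{WReach}_r[G,L,v]|$, and for an $n$-vertex digraph $\mathrm{wcol}_\infty(G)=\mathrm{wcol}_n(G)$. A digraph $H$ is a directed topological minor of $G$ if there is an injective map $\delta:V(H)\to V(G)$ and a map sending each arc $(u,v)$ of $H$ to a directed path in $G$ from $\delta(u)$ to $\delta(v)$ that is internally vertex-disjoint from all $\delta(w)$ and from all other such paths. *)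

theory Defs
  imports Complex_Main
begin

definition digraph :: "'a set \<Rightarrow> ('a \<times> 'a) set \<Rightarrow> bool" where
  "digraph V E \<longleftrightarrow> finite V \<and> E \<subseteq> V \<times> V \<and> (\<forall>v. (v, v) \<notin> E)"

text \<open>A directed path, as the nonempty list of its (distinct) vertices; its length is the
  number of arcs, i.e. length xs - 1.\<close>
definition dipath :: "'a set \<Rightarrow> ('a \<times> 'a) set \<Rightarrow> 'a list \<Rightarrow> bool" where
  "dipath V E xs \<longleftrightarrow> xs \<noteq> [] \<and> distinct xs \<and> set xs \<subseteq> V \<and>
     (\<forall>i. Suc i < length xs \<longrightarrow> (xs ! i, xs ! Suc i) \<in> E)"

definition dipath_from_to :: "'a set \<Rightarrow> ('a \<times> 'a) set \<Rightarrow> 'a \<Rightarrow> 'a \<Rightarrow> 'a list \<Rightarrow> bool" where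
  "dipath_from_to V E u v xs \<longleftrightarrow> dipath V E xs \<and> hd xs = u \<and> last xs = v"

definition WReach :: "nat \<Rightarrow> 'a set \<Rightarrow> ('a \<times> 'a) set \<Rightarrow> ('a \<times> 'a) set \<Rightarrow> 'a \<Rightarrow> 'a set" where
  "WReach r V E L v = {u. \<exists>xs. (dipath_from_to V E u v xs \<or> dipath_from_to V E v u xs)
      \<and> length xs - 1 \<le> r \<and> (\<forall>w\<in>set xs. (u, w) \<in> L)}"

definition wcol :: "nat \<Rightarrow> 'a set \<Rightarrow> ('a \<times> 'a) set \<Rightarrow> nat" where
  "wcol r V E = (LEAST k. \<exists>L. linear_order_on V L \<and> (\<forall>v\<in>V. card (WReach r V E L v) \<le> k))"

definition wcol_inf :: "'a set \<Rightarrow> ('a \<times> 'a) set \<Rightarrow> nat" where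
  "wcol_inf V E = wcol (card V) V E"

definition internal :: "'a list \<Rightarrow> 'a set" where
  "internal xs = set (butlast (tl xs))"

definition dir_top_minor :: "'b set \<Rightarrow> ('b \<times> 'b) set \<Rightarrow> 'a set \<Rightarrow> ('a \<times> 'a) set \<Rightarrow> bool" where
  "dir_top_minor VH EH V E \<longleftrightarrow> (\<exists>(\<delta>::'b \<Rightarrow> 'a) (P::'b \<times> 'b \<Rightarrow> 'a list).
     inj_on \<delta> VH \<and> \<delta> ` VH \<subseteq> V \<and>
     (\<forall>(a, b)\<in>EH. dipath_from_to V E (\<delta> a) (\<delta> b) (P (a, b))) \<and>
     (\<forall>e\<in>EH. internal (P e) \<inter> \<delta> ` VH = {}) \<and>
     (\<forall>e\<in>EH. \<forall>e'\<in>EH. e \<noteq> e' \<longrightarrow> internal (P e) \<inter> set (P e') = {}))"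

end

theory Submission
  imports Defs
begin

lemma lin_min:
  assumes lin: "linear_order_on V L" and fin: "finite S" and ne: "S \<noteq> {}" and sub: "S \<subseteq> V"
  shows "\<exists>m\<in>S. \<forall>w\<in>S. (m, w) \<in> L"
  using fin ne sub
proof (induction S rule: finite_ne_induct)
  case (singleton x)
  then show ?case using lin
    by (auto simp: linear_order_on_def partial_order_on_def preorder_on_def refl_on_def)
next
  case (insert x F)
  then obtain m where m: "m \<in> F" "\<forall>w\<in>F. (m, w) \<in> L" by auto
  have tr: "trans L" and rf: "\<forall>y\<in>V. (y,y)\<in>L" and tot: "total_on V L"
    using lin by (auto simp: linear_order_on_def partial_order_on_def preorder_on_def refl_on_def)
  have xV: "x \<in> V" and FV: "F \<subseteq> V" using insert.prems by auto
  have mV: "m \<in> V" using m(1) FV by auto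
  show ?case
  proof (cases "(x, m) \<in> L")
    case True
    have "\<forall>w\<in>insert x F. (x, w) \<in> L"
    proof
      fix w assume w: "w \<in> insert x F"
      show "(x, w) \<in> L"
      proof (cases "w = x")
        case True then show ?thesis using rf xV by simp
      next
        case False
        then have "(m, w) \<in> L" using w m(2) by simp
        then show ?thesis using \<open>(x, m) \<in> L\<close> tr by (meson transD)
      qed
    qed
    then show ?thesis by blast
  next
    case False
    have "x \<noteq> m" using False rf xV by auto
    then have "(m, x) \<in> L" using tot False xV mV unfolding total_on_def by blast
    then show ?thesis using m by blast
  qed
qed

lemma dipath_sub:
  assumes "dipath V E xs" "i \<le> j" "j < length xs"
  shows "dipath_from_to V E (xs ! i) (xs ! j) (drop i (take (Suc j) xs))"
proof -
  let ?ys = "drop i (take (Suc j) xs)"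
  have len: "length ?ys = Suc j - i" using assms by auto
  have nth: "\<And>k. k < length ?ys \<Longrightarrow> ?ys ! k = xs ! (i + k)"
    using assms by auto
  have "?ys \<noteq> []" using len assms by auto
  moreover have "distinct ?ys" using assms by (auto simp: dipath_def)
  moreover have "set ?ys \<subseteq> V" using assms(1) unfolding dipath_def
    by (meson in_set_dropD in_set_takeD subset_iff)
  moreover have "\<forall>k. Suc k < length ?ys \<longrightarrow> (?ys ! k, ?ys ! Suc k) \<in> E"
  proof (intro allI impI)
    fix k assume k: "Suc k < length ?ys"
    then have "Suc (i + k) < length xs" using len assms by auto
    then show "(?ys ! k, ?ys ! Suc k) \<in> E" using nth[of k] nth[of "Suc k"] k assms(1)
      unfolding dipath_def by auto
  qed
  moreover have "hd ?ys = xs ! i" using nth[of 0] len assms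
    by (simp add: hd_conv_nth \<open>?ys \<noteq> []\<close>)
  moreover have "last ?ys = xs ! j" using nth[of "length ?ys - 1"] len assms
    by (simp add: last_conv_nth \<open>?ys \<noteq> []\<close>)
  ultimately show ?thesis unfolding dipath_from_to_def dipath_def by auto
qed

lemma reach:
  assumes "dipath V E xs" "m \<in> set xs" "v \<in> set xs" "\<forall>w\<in>set xs. (m, w) \<in> L"
    "length xs - 1 \<le> r"
  shows "m \<in> WReach r V E L v"
proof -
  obtain i where i: "i < length xs" "xs ! i = m" using assms(2) by (meson in_set_conv_nth)
  obtain j where j: "j < length xs" "xs ! j = v" using assms(3) by (meson in_set_conv_nth)
  show ?thesis
  proof (cases "i \<le> j")
    case True
    let ?ys = "drop i (take (Suc j) xs)"
    have p: "dipath_from_to V E m v ?ys" using dipath_sub[OF assms(1) True j(1)] i j by simp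
    have "set ?ys \<subseteq> set xs" by (meson in_set_dropD in_set_takeD subsetI)
    moreover have "length ?ys - 1 \<le> r" using assms(5) by auto
    ultimately show ?thesis using p assms(4) unfolding WReach_def by blast
  next
    case False
    let ?ys = "drop j (take (Suc i) xs)"
    have p: "dipath_from_to V E v m ?ys" using dipath_sub[OF assms(1) _ i(1), of j] False i j by simp
    have "set ?ys \<subseteq> set xs" by (meson in_set_dropD in_set_takeD subsetI)
    moreover have "length ?ys - 1 \<le> r" using assms(5) by auto
    ultimately show ?thesis using p assms(4) unfolding WReach_def by blast
  qed
qed

lemma WReach_sub: "WReach r V E L v \<subseteq> V"
proof
  fix u assume "u \<in> WReach r V E L v"
  then obtain xs where "dipath_from_to V E u v xs \<or> dipath_from_to V E v u xs"
    unfolding WReach_def by blast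
  then show "u \<in> V" unfolding dipath_from_to_def dipath_def
    by (metis hd_in_set last_in_set subsetD)
qed

lemma dipath_take: "dipath V E xs \<Longrightarrow> 0 < k \<Longrightarrow> dipath V E (take k xs)"
  unfolding dipath_def by (auto dest: in_set_takeD)

lemma dipath_drop: "dipath V E xs \<Longrightarrow> k < length xs \<Longrightarrow> dipath V E (drop k xs)"
  unfolding dipath_def by (auto dest: in_set_dropD)

lemma part1:
  assumes lin: "linear_order_on V L"
  shows "dipath V E xs \<Longrightarrow> length xs - 1 \<le> r \<Longrightarrow>
    \<exists>v\<in>set xs. length xs + 1 \<le> 2 ^ card (WReach r V E L v \<inter> set xs)"
proof (induction "length xs" arbitrary: xs rule: less_induct)
  case less
  have dp: "dipath V E xs" by fact
  let ?n = "length xs"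
  have "set xs \<noteq> {}" "set xs \<subseteq> V" using dp unfolding dipath_def by auto
  then obtain m where m: "m \<in> set xs" "\<forall>w\<in>set xs. (m, w) \<in> L"
    using lin_min[OF lin] by (metis List.finite_set)
  obtain k where k: "k < ?n" "xs ! k = m" using m(1) by (meson in_set_conv_nth)
  have dec: "xs = take k xs @ m # drop (Suc k) xs" using id_take_nth_drop[OF k(1)] k by simp
  have dist: "distinct xs" using dp unfolding dipath_def by auto
  have dd: "distinct (take k xs @ m # drop (Suc k) xs)" using dist by (subst (asm) dec) assumption
  show ?case
  proof (cases "?n = 1")
    case True
    have "m \<in> WReach r V E L m \<inter> set xs" using reach[OF dp m(1) m(1) m(2) less.prems(2)] m by auto
    then have "card (WReach r V E L m \<inter> set xs) \<ge> 1"
      by (simp add: Suc_le_eq card_gt_0_iff) blast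
    then have "2 ^ 1 \<le> (2::nat) ^ card (WReach r V E L m \<inter> set xs)"
      using power_increasing[of 1 "card (WReach r V E L m \<inter> set xs)" "2::nat"] by simp
    then show ?thesis using True m(1) by (intro bexI[of _ m]) auto
  next
    case False
    then have n2: "?n \<ge> 2" using k by linarith
    obtain ps where ps: "dipath V E ps" "length ps < ?n" "set ps \<subseteq> set xs" "m \<notin> set ps"
      "?n + 1 \<le> 2 * (length ps + 1)"
    proof (cases "k \<ge> ?n - 1 - k")
      case True
      have "dipath V E (take k xs)" using dipath_take[OF dp] True n2 by auto
      moreover have "m \<notin> set (take k xs)" using dd by simp
      ultimately show ?thesis using that[of "take k xs"] True k by (auto simp: set_take_subset)
    next
      case False
      have "dipath V E (drop (Suc k) xs)" using dipath_drop[OF dp] False n2 by auto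
      moreover have "m \<notin> set (drop (Suc k) xs)" using dd by simp
      ultimately show ?thesis using that[of "drop (Suc k) xs"] False k by (auto simp: set_drop_subset)
    qed
    from less.hyps[OF ps(2) ps(1)] less.prems(2) ps(2)
    obtain v where v: "v \<in> set ps" "length ps + 1 \<le> 2 ^ card (WReach r V E L v \<inter> set ps)"
      by fastforce
    have vx: "v \<in> set xs" using v ps by auto
    have mw: "m \<in> WReach r V E L v" using reach[OF dp m(1) vx m(2) less.prems(2)] .
    have sub: "insert m (WReach r V E L v \<inter> set ps) \<subseteq> WReach r V E L v \<inter> set xs"
      using mw m(1) ps(3) by blast
    have "card (insert m (WReach r V E L v \<inter> set ps)) \<le> card (WReach r V E L v \<inter> set xs)"
      by (rule card_mono[OF _ sub]) simp
    then have c: "Suc (card (WReach r V E L v \<inter> set ps)) \<le> card (WReach r V E L v \<inter> set xs)"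
      using ps(4) by simp
    have "?n + 1 \<le> 2 * 2 ^ card (WReach r V E L v \<inter> set ps)" using ps(5) v(2) by (meson le_trans mult_le_mono2)
    also have "\<dots> = 2 ^ Suc (card (WReach r V E L v \<inter> set ps))" by simp
    also have "\<dots> \<le> 2 ^ card (WReach r V E L v \<inter> set xs)"
      using c by (intro power_increasing) auto
    finally show ?thesis using vx by blast
  qed
qed

lemma in_internal:
  assumes "xs \<noteq> []" "x \<in> set xs" "x \<noteq> hd xs" "x \<noteq> last xs"
  shows "x \<in> internal xs"
proof -
  obtain h t where xs: "xs = h # t" using assms(1) by (cases xs) auto
  have "x \<in> set t" using assms xs by auto
  then have "t \<noteq> []" by auto
  have "t = butlast t @ [last t]" using \<open>t \<noteq> []\<close> by simp
  have "x \<noteq> last t" using assms(4) xs \<open>t \<noteq> []\<close> by simp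
  then have "x \<in> set (butlast t)" using \<open>x \<in> set t\<close> \<open>t = butlast t @ [last t]\<close>
    by (metis UnE empty_iff empty_set list.set(2) set_append singletonD)
  then show ?thesis unfolding internal_def using xs by simp
qed

theorem mainTheorem19:
  fixes V :: "'a set" and E :: "('a \<times> 'a) set" and c :: nat
  assumes "digraph V E"
    and "wcol_inf V E \<le> c"
  shows "\<not> (\<exists>xs. dipath V E xs \<and> int (length xs) - 1 > 2 ^ c - 2) \<and>
         (\<forall>(VH :: 'b set) EH. digraph VH EH \<and> dir_top_minor VH EH V E \<longrightarrow>
           real (card EH) / real (card VH) \<le> 4 * real c)"
proof -
  let ?r = "card V"
  have finV: "finite V" using assms(1) unfolding digraph_def by auto
  obtain L0 where "well_order_on V L0" using well_order_on by blast
  then have L0: "linear_order_on V L0" unfolding well_order_on_def by auto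
  have "\<forall>v\<in>V. card (WReach ?r V E L0 v) \<le> ?r" using card_mono[OF finV WReach_sub] by blast
  then have "\<exists>k. \<exists>L. linear_order_on V L \<and> (\<forall>v\<in>V. card (WReach ?r V E L v) \<le> k)" using L0 by blast
  from LeastI_ex[OF this]
  obtain L where lin: "linear_order_on V L" and bd0: "\<forall>v\<in>V. card (WReach ?r V E L v) \<le> wcol ?r V E"
    unfolding wcol_def by blast
  have bd: "\<forall>v\<in>V. card (WReach ?r V E L v) \<le> c"
    using bd0 assms(2) unfolding wcol_inf_def by fastforce
  have lenV: "length xs \<le> card V" if "dipath V E xs" for xs
  proof -
    have "distinct xs" "set xs \<subseteq> V" using that unfolding dipath_def by auto
    then show ?thesis using card_mono[OF finV] distinct_card by metis
  qed
  have P1: "\<not> (\<exists>xs. dipath V E xs \<and> int (length xs) - 1 > 2 ^ c - 2)"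
  proof
    assume "\<exists>xs. dipath V E xs \<and> int (length xs) - 1 > 2 ^ c - 2"
    then obtain xs where xs: "dipath V E xs" "int (length xs) - 1 > 2 ^ c - 2" by blast
    have "length xs - 1 \<le> ?r" using lenV[OF xs(1)] by auto
    from part1[OF lin xs(1) this] obtain v where v: "v \<in> set xs"
      "length xs + 1 \<le> 2 ^ card (WReach ?r V E L v \<inter> set xs)" by blast
    have vV: "v \<in> V" using v xs(1) unfolding dipath_def by auto
    have "card (WReach ?r V E L v \<inter> set xs) \<le> card (WReach ?r V E L v)"
      by (meson WReach_sub finV card_mono finite_subset inf_le1)
    then have "card (WReach ?r V E L v \<inter> set xs) \<le> c" using bd vV by auto
    then have "(2::nat) ^ card (WReach ?r V E L v \<inter> set xs) \<le> 2 ^ c" by (intro power_increasing) auto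
    then have "length xs + 1 \<le> (2::nat) ^ c" using v by linarith
    then have "int (length xs + 1) \<le> int (2 ^ c)" by (simp only: of_nat_le_iff)
    then have "int (length xs) + 1 \<le> 2 ^ c" by simp
    then show False using xs(2) by linarith
  qed
  have P2: "\<forall>(VH :: 'b set) EH. digraph VH EH \<and> dir_top_minor VH EH V E \<longrightarrow>
           real (card EH) / real (card VH) \<le> 4 * real c"
  proof (intro allI impI)
    fix VH :: "'b set" and EH
    assume a: "digraph VH EH \<and> dir_top_minor VH EH V E"
    then have finVH: "finite VH" and EHsub: "EH \<subseteq> VH \<times> VH" unfolding digraph_def by auto
    from a have "dir_top_minor VH EH V E" by simp
    then obtain \<delta> :: "'b \<Rightarrow> 'a" and P where inj: "inj_on \<delta> VH" and dV: "\<delta> ` VH \<subseteq> V" and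
      paths: "\<forall>(x, y)\<in>EH. dipath_from_to V E (\<delta> x) (\<delta> y) (P (x, y))" and
      int0: "\<forall>e\<in>EH. internal (P e) \<inter> \<delta> ` VH = {}" and
      disj: "\<forall>e\<in>EH. \<forall>e'\<in>EH. e \<noteq> e' \<longrightarrow> internal (P e) \<inter> set (P e') = {}"
      unfolding dir_top_minor_def by (elim exE conjE) (rule that; assumption)
    define mn where "mn e = (SOME m. m \<in> set (P e) \<and> (\<forall>w\<in>set (P e). (m, w) \<in> L))" for e
    have mn: "mn e \<in> set (P e) \<and> (\<forall>w\<in>set (P e). (mn e, w) \<in> L)" if "e \<in> EH" for e
    proof -
      obtain x y where e: "e = (x, y)" by fastforce
      have "dipath V E (P e)" using paths that e unfolding dipath_from_to_def by auto
      then have "set (P e) \<noteq> {}" "set (P e) \<subseteq> V" unfolding dipath_def by auto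
      then have "\<exists>m. m \<in> set (P e) \<and> (\<forall>w\<in>set (P e). (m, w) \<in> L)"
        using lin_min[OF lin] by (metis List.finite_set)
      then show ?thesis unfolding mn_def by (rule someI_ex)
    qed
    define f where "f e = (if mn e = \<delta> (fst e) then (snd e, mn e, True) else (fst e, mn e, False))" for e
    define S where "S = Sigma VH (\<lambda>x. WReach ?r V E L (\<delta> x) \<times> (UNIV :: bool set))"
    have pe: "dipath_from_to V E (\<delta> x) (\<delta> y) (P (x, y))" if "(x, y) \<in> EH" for x y
      using paths that by auto
    have fS: "f ` EH \<subseteq> S"
    proof
      fix z assume "z \<in> f ` EH"
      then obtain x y where e: "(x, y) \<in> EH" and z: "z = f (x, y)" by auto
      have p: "dipath V E (P (x,y))" "hd (P (x,y)) = \<delta> x" "last (P (x,y)) = \<delta> y" "P (x,y) \<noteq> []"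
        using pe[OF e] unfolding dipath_from_to_def dipath_def by auto
      have l: "length (P (x,y)) - 1 \<le> ?r" using lenV[OF p(1)] by auto
      have xy: "x \<in> VH" "y \<in> VH" using e EHsub by auto
      have hx: "\<delta> x \<in> set (P (x,y))" "\<delta> y \<in> set (P (x,y))" using p
        by (metis hd_in_set, metis last_in_set)
      note M = mn[OF e]
      show "z \<in> S"
      proof (cases "mn (x,y) = \<delta> x")
        case True
        have "mn (x,y) \<in> WReach ?r V E L (\<delta> y)" using reach[OF p(1) _ hx(2) _ l] M by auto
        then show ?thesis using True z xy unfolding f_def S_def by auto
      next
        case False
        have "mn (x,y) \<in> WReach ?r V E L (\<delta> x)" using reach[OF p(1) _ hx(1) _ l] M by auto
        then show ?thesis using False z xy unfolding f_def S_def by auto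
      qed
    qed
    have injf: "inj_on f EH"
    proof
      fix e1 e2 assume e1: "e1 \<in> EH" and e2: "e2 \<in> EH" and eq: "f e1 = f e2"
      obtain a b where ab: "e1 = (a, b)" by fastforce
      obtain a' b' where ab': "e2 = (a', b')" by fastforce
      have in1: "a \<in> VH" "b \<in> VH" "a' \<in> VH" "b' \<in> VH" using e1 e2 ab ab' EHsub by auto
      show "e1 = e2"
      proof (cases "mn e1 = \<delta> a")
        case True
        then have T2: "mn e2 = \<delta> a'" using eq ab ab' unfolding f_def by (auto split: if_splits)
        then show ?thesis using True eq ab ab' inj in1 unfolding f_def by (auto simp: inj_on_def)
      next
        case False
        then have F2: "mn e2 \<noteq> \<delta> a'" using eq ab ab' unfolding f_def by (auto split: if_splits)
        have aa: "a = a'" and mm: "mn e1 = mn e2" using eq False F2 ab ab' unfolding f_def by auto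
        show ?thesis
        proof (rule ccontr)
          assume ne: "e1 \<noteq> e2"
          have d1: "internal (P e1) \<inter> set (P e2) = {}" and d2: "internal (P e2) \<inter> set (P e1) = {}"
            using disj e1 e2 ne by auto
          have p1: "P e1 \<noteq> []" "hd (P e1) = \<delta> a" "last (P e1) = \<delta> b"
            using pe e1 ab unfolding dipath_from_to_def dipath_def by auto
          have p2: "P e2 \<noteq> []" "hd (P e2) = \<delta> a'" "last (P e2) = \<delta> b'"
            using pe e2 ab' unfolding dipath_from_to_def dipath_def by auto
          have m1: "mn e1 \<in> set (P e1)" and m2: "mn e2 \<in> set (P e2)" using mn e1 e2 by auto
          have "mn e1 \<notin> internal (P e1)" using d1 m2 mm by auto
          then have b1: "mn e1 = \<delta> b" using in_internal[OF p1(1) m1] p1 False by auto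
          have "mn e2 \<notin> internal (P e2)" using d2 m1 mm by auto
          then have b2: "mn e2 = \<delta> b'" using in_internal[OF p2(1) m2] p2 F2 by auto
          have "b = b'" using b1 b2 mm inj in1 by (auto simp: inj_on_def)
          then show False using ne aa ab ab' by auto
        qed
      qed
    qed
    have finW: "\<And>x. finite (WReach ?r V E L (\<delta> x))" using WReach_sub finV by (meson finite_subset)
    have finS: "finite S" unfolding S_def using finVH finW by auto
    have "card EH \<le> card S" using card_inj_on_le[OF injf fS finS] .
    also have "card S = (\<Sum>x\<in>VH. card (WReach ?r V E L (\<delta> x)) * 2)"
      unfolding S_def using finVH finW by (simp add: card_cartesian_product)
    also have "\<dots> \<le> (\<Sum>x\<in>VH. c * 2)"
    proof (rule sum_mono)
      fix x assume "x \<in> VH"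
      then have "\<delta> x \<in> V" using dV by blast
      then show "card (WReach ?r V E L (\<delta> x)) * 2 \<le> c * 2" using bd by auto
    qed
    also have "\<dots> = 2 * c * card VH" by simp
    finally have "card EH \<le> 2 * c * card VH" .
    then have "real (card EH) \<le> real (2 * c * card VH)" by (simp only: of_nat_le_iff)
    then have ce: "real (card EH) \<le> 2 * real c * real (card VH)" by simp
    show "real (card EH) / real (card VH) \<le> 4 * real c"
    proof (cases "card VH = 0")
      case True then show ?thesis by simp
    next
      case False
      then have "real (card VH) > 0" by simp
      then show ?thesis using ce by (simp add: divide_le_eq)
    qed
  qed
  show ?thesis using P1 P2 by blast
qed

end
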